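(* Let $\mathbf G(\mathbf x_1),\ldots,\mathbf G(\mathbf x_N)$ be real $m\times s$ matrices such that the column space of the $m\times Ns$ matrix $(\mathbf G(\mathbf x_1),\ldots,\mathbf G(\mathbf x_N))$ is all of $\mathbb R^m$. Consider the following procedure (mKYM). Set $\mathcal S\gets\emptyset$ and $\mathbf P\gets\mathbf I_m$. Repeat: (1) choose any $\mathbf v\in\mathcal C(\mathbf P)$ with $\mathbf v\neq\mathbf 0_m$; (2) choose any $i^*\in\mathrm{argmax}_{i\in\{1,\ldots,N\}\setminus\mathcal S}\lVert\mathbf v^T\mathbf G(\mathbf x_i)\rVert^2$ (Euclidean norm); (3) set $\mathcal S\gets\mathcal S\cup\{i^*\}$; (4) if $|\mathcal S|=m$, stop the loop; (5) set $\widetilde{\mathbf G}\gets\mathbf P\mathbf G(\mathbf x_{i^*})$ and $\mathbf P\gets\mathbf P-\widetilde{\mathbf G}\widetilde{\mathbf G}^+$; until $\mathrm{tr}[\mathbf P]<0.5$. Finally output the design $\mathbf w$ that is uniform on $\{\mathbf x_i: i\in\mathcal S\}$, i.e., $w_i=1/|\mathcal S|$ for $i\in\mathcal S$ and $w_i=0$ otherwise. Then, for any choices made in steps (1) and (2), the procedure terminates with a set $\mathcal S$ of size at most $m$, and the output design $\mathbf w$ is nonsingular, i.e., $\mathbf M(\mathbf w)=\sum_{i=1}^N w_i\mathbf G(\mathbf x_i)\mathbf G^T(\mathbf x_i)$ is nonsingular.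
   Context: $\mathcal C(\mathbf A)$ denotes the column space of a matrix $\mathbf A$, and $\mathbf A^+$ its Moore–Penrose pseudoinverse. A design is a vector $\mathbf w\in\mathbb R^N$ with nonnegative components summing to $1$; it is nonsingular if its information matrix $\mathbf M(\mathbf w)$ is nonsingular. *)

theory Defs
  imports "HOL-Analysis.Analysis"
begin

definition col_space :: "real^'n^'m \<Rightarrow> (real^'m) set" where
  "col_space A = span (columns A)"

definition pinv :: "real^'n^'m \<Rightarrow> real^'m^'n" where
  "pinv A = (THE X. A ** X ** A = A \<and> X ** A ** X = X \<and>
                    transpose (A ** X) = A ** X \<and> transpose (X ** A) = X ** A)"

definition info_matrix :: "('i::finite \<Rightarrow> real^'s^'m) \<Rightarrow> ('i \<Rightarrow> real) \<Rightarrow> real^'m^'m" where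
  "info_matrix G w = (\<Sum>i\<in>UNIV. w i *\<^sub>R (G i ** transpose (G i)))"

definition is_design :: "('i::finite \<Rightarrow> real) \<Rightarrow> bool" where
  "is_design w \<longleftrightarrow> (\<forall>i. w i \<ge> 0) \<and> (\<Sum>i\<in>UNIV. w i) = 1"

definition nonsingular_design :: "('i::finite \<Rightarrow> real^'s^'m) \<Rightarrow> ('i \<Rightarrow> real) \<Rightarrow> bool" where
  "nonsingular_design G w \<longleftrightarrow> invertible (info_matrix G w)"

definition uniform_design :: "'i set \<Rightarrow> 'i \<Rightarrow> real" where
  "uniform_design S = (\<lambda>i. if i \<in> S then 1 / real (card S) else 0)"

definition mkym_choice :: "('i::finite \<Rightarrow> real^'s^'m) \<Rightarrow> 'i set \<Rightarrow> real^'m^'m \<Rightarrow> 'i \<Rightarrow> bool" where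
  "mkym_choice G S P i \<longleftrightarrow> (\<exists>v. v \<in> col_space P \<and> v \<noteq> 0 \<and> i \<notin> S \<and>
      (\<forall>j. j \<notin> S \<longrightarrow> (norm (v v* G j))\<^sup>2 \<le> (norm (v v* G i))\<^sup>2))"

definition mkym_update :: "('i::finite \<Rightarrow> real^'s^'m) \<Rightarrow> real^'m^'m \<Rightarrow> 'i \<Rightarrow> real^'m^'m" where
  "mkym_update G P i = P - (P ** G i) ** pinv (P ** G i)"

text \<open>One full loop iteration after which the loop continues
  (no break in step (4), and the until-condition tr P < 0.5 fails).\<close>
definition mkym_next :: "('i::finite \<Rightarrow> real^'s^'m) \<Rightarrow> ('i set \<times> (real^'m^'m)) \<Rightarrow> ('i set \<times> (real^'m^'m)) \<Rightarrow> bool" where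
  "mkym_next G st st' \<longleftrightarrow> (\<exists>i. mkym_choice G (fst st) (snd st) i \<and>
      fst st' = insert i (fst st) \<and> card (fst st') \<noteq> CARD('m) \<and>
      snd st' = mkym_update G (snd st) i \<and> \<not> (trace (snd st') < 1/2))"

text \<open>One loop iteration after which the loop ends (by the break in step (4) or by
  the until-condition), with final index set S'.\<close>
definition mkym_stop :: "('i::finite \<Rightarrow> real^'s^'m) \<Rightarrow> ('i set \<times> (real^'m^'m)) \<Rightarrow> 'i set \<Rightarrow> bool" where
  "mkym_stop G st S' \<longleftrightarrow> (\<exists>i. mkym_choice G (fst st) (snd st) i \<and>
      S' = insert i (fst st) \<and>
      (card S' = CARD('m) \<or> trace (mkym_update G (snd st) i) < 1/2))"

definition mkym_init :: "'i set \<times> (real^'m^'m)" where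
  "mkym_init = ({}, mat 1)"

definition mkym_reachable :: "('i::finite \<Rightarrow> real^'s^'m) \<Rightarrow> ('i set \<times> (real^'m^'m)) \<Rightarrow> bool" where
  "mkym_reachable G st \<longleftrightarrow> (mkym_next G)\<^sup>*\<^sup>* mkym_init st"

end

theory Submission
  imports Defs
begin


lemma sym_from_adj:
  fixes M :: "real^'n^'n"
  assumes "\<And>x y. inner (M *v x) y = inner x (M *v y)"
  shows "transpose M = M"
proof -
  have "x v* M = M *v x" for x
  proof -
    have "inner (x v* M - M *v x) y = 0" for y
      by (simp add: inner_diff_left dot_lmul_matrix assms)
    then have "inner (x v* M - M *v x) (x v* M - M *v x) = 0" by blast
    then show ?thesis by simp
  qed
  then show ?thesis by (simp add: matrix_eq)
qed

lemma pinv_unique: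
  fixes A :: "real^'n^'m" and X Y :: "real^'m^'n"
  assumes X: "A ** X ** A = A" "X ** A ** X = X" "transpose (A ** X) = A ** X" "transpose (X ** A) = X ** A"
  and Y: "A ** Y ** A = A" "Y ** A ** Y = Y" "transpose (A ** Y) = A ** Y" "transpose (Y ** A) = Y ** A"
  shows "X = Y"
proof -
  have tA1: "transpose A = transpose A ** (A ** Y)"
    by (metis Y(1) Y(3) matrix_transpose_mul)
  have tA2: "transpose A = (X ** A) ** transpose A"
    by (metis X(1) X(4) matrix_transpose_mul matrix_mul_assoc)
  have "X = X ** (transpose X ** transpose A)"
    by (metis X(2) X(3) matrix_transpose_mul matrix_mul_assoc)
  also have "\<dots> = X ** (transpose X ** (transpose A ** (A ** Y)))" using tA1 by simp
  also have "\<dots> = X ** (A ** X) ** A ** Y"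
    by (metis X(3) matrix_transpose_mul matrix_mul_assoc)
  also have "\<dots> = X ** A ** Y" by (metis X(2) matrix_mul_assoc)
  finally have 1: "X = X ** A ** Y" .
  have "Y = (transpose A ** transpose Y) ** Y"
    by (metis Y(2) Y(4) matrix_transpose_mul matrix_mul_assoc)
  also have "\<dots> = ((X ** A) ** transpose A ** transpose Y) ** Y" using tA2 by simp
  also have "\<dots> = X ** A ** (Y ** A) ** Y"
    by (metis Y(4) matrix_transpose_mul matrix_mul_assoc)
  also have "\<dots> = X ** A ** Y" by (metis Y(2) matrix_mul_assoc)
  finally show ?thesis using 1 by simp
qed




lemma inner_mv_left: "inner ((A::real^'n^'m) *v w) r = inner (r v* A) w"
  by (metis dot_lmul_matrix inner_commute)

lemma pinv_exists:
  fixes A :: "real^'n^'m"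
  shows "\<exists>X. A ** X ** A = A \<and> X ** A ** X = X \<and> transpose (A ** X) = A ** X \<and> transpose (X ** A) = X ** A"
proof -
  define Q where "Q = range (\<lambda>u. u v* A)"
  have subQ: "subspace Q" unfolding Q_def
    using linear_subspace_image[OF matrix_vector_mul_linear[of "transpose A"] subspace_UNIV] by simp
  have key: "A *v d = 0" if "(A *v d) v* A = 0" for d
  proof -
    have "inner (A *v d) (A *v d) = inner ((A *v d) v* A) d"
      by (rule inner_mv_left)
    then show ?thesis using that by simp
  qed
  have ker: "d = 0" if dQ: "d \<in> Q" "A *v d = 0" for d
  proof -
    obtain u where u: "d = u v* A" using dQ(1) unfolding Q_def by auto
    have "inner d d = inner u (A *v d)"
      using dot_lmul_matrix[of u A d] u by (simp add: inner_commute)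
    then show ?thesis using that(2) by simp
  qed
  have orthQ: "inner d w = 0" if dQ: "d \<in> Q" "A *v w = 0" for d w
  proof -
    obtain u where u: "d = u v* A" using dQ(1) unfolding Q_def by auto
    show ?thesis using inner_mv_left[of A w u] that(2) u by (simp add: inner_commute)
  qed
  have ex: "\<exists>z. z \<in> Q \<and> (A *v z) v* A = y v* A" for y
  proof -
    have subR: "subspace (range (\<lambda>w. A *v w))"
      by (rule linear_subspace_image[OF matrix_vector_mul_linear subspace_UNIV])
    obtain p q where p: "p \<in> span (range (\<lambda>w. A *v w))"
      and q: "\<And>w. w \<in> span (range (\<lambda>w. A *v w)) \<Longrightarrow> orthogonal q w" and pq: "y = p + q"
      using orthogonal_subspace_decomp_exists[of "range (\<lambda>w. A *v w)" y] by metis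
    from p subR have "p \<in> range (\<lambda>w. A *v w)" by (metis span_eq_iff)
    then obtain w where w: "p = A *v w" by blast
    have "inner (q v* A) (q v* A) = 0"
      using q[of "A *v (q v* A)"] inner_mv_left[of A "q v* A" q]
      by (simp add: span_base orthogonal_def inner_commute)
    then have tq: "q v* A = 0" by simp
    obtain w1 w2 where w1: "w1 \<in> span Q" and w2: "\<And>x. x \<in> span Q \<Longrightarrow> orthogonal w2 x"
      and ww: "w = w1 + w2"
      using orthogonal_subspace_decomp_exists[of Q w] by metis
    have "(A *v w2) v* A \<in> Q" unfolding Q_def by blast
    then have "inner w2 ((A *v w2) v* A) = 0"
      using w2 subQ by (simp add: orthogonal_def span_base)
    then have "inner (A *v w2) (A *v w2) = 0"
      using inner_mv_left[of A w2 "A *v w2"] by (simp add: inner_commute)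
    then have Aw2: "A *v w2 = 0" by simp
    have "w1 \<in> Q" using w1 subQ by (metis span_eq_iff)
    moreover have "(A *v w1) v* A = y v* A"
    proof -
      have "A *v w1 = p" using w ww Aw2 by (simp add: matrix_vector_right_distrib)
      then show ?thesis using pq tq by (simp add: vector_matrix_left_distrib)
    qed
    ultimately show ?thesis by blast
  qed
  have uniq: "z = z'" if "z \<in> Q" "z' \<in> Q" "(A *v z) v* A = (A *v z') v* A" for z z'
  proof -
    have "(A *v (z - z')) v* A = 0" using that(3)
      by (simp add: matrix_vector_mult_diff_distrib vector_matrix_mult_diff_distrib)
    then have "A *v (z - z') = 0" by (rule key)
    moreover have "z - z' \<in> Q" using that subQ by (simp add: subspace_diff)
    ultimately show ?thesis using ker by fastforce
  qed
  define f where "f y = (SOME z. z \<in> Q \<and> (A *v z) v* A = y v* A)" for y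
  have f: "f y \<in> Q \<and> (A *v f y) v* A = y v* A" for y
    unfolding f_def by (rule someI_ex) (rule ex)
  have fu: "f y = z" if "z \<in> Q" "(A *v z) v* A = y v* A" for y z
    using uniq[of "f y" z] f[of y] that by simp
  have lin: "linear f"
  proof (rule linearI)
    fix x y show "f (x + y) = f x + f y"
      using f[of x] f[of y] subQ
      by (intro fu) (simp_all add: subspace_add matrix_vector_right_distrib vector_matrix_left_distrib)
  next
    fix c x show "f (c *\<^sub>R x) = c *\<^sub>R f x"
      using f[of x] subQ
      by (intro fu) (simp_all add: subspace_scale matrix_vector_mult_scaleR scaleR_vector_matrix_assoc)
  qed
  define X where "X = matrix f"
  have Xf: "X *v y = f y" for y
    unfolding X_def using lin by (simp add: matrix_works linear_matrix_vector_mul_eq)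
  have AfA: "A *v f (A *v x) = A *v x" for x
  proof -
    have "(A *v (f (A *v x) - x)) v* A = 0" using f[of "A *v x"]
      by (simp add: matrix_vector_mult_diff_distrib vector_matrix_mult_diff_distrib)
    then have "A *v (f (A *v x) - x) = 0" by (rule key)
    then show ?thesis by (simp add: matrix_vector_mult_diff_distrib)
  qed
  have 1: "A ** X ** A = A"
    by (simp add: matrix_eq Xf AfA flip: matrix_vector_mul_assoc)
  have 2: "X ** A ** X = X"
    by (simp add: matrix_eq Xf f fu flip: matrix_vector_mul_assoc)
  have orthR: "inner (A *v w) (y - A *v f y) = 0" for w y
    using inner_mv_left[of A w "y - A *v f y"] f[of y]
    by (simp add: vector_matrix_mult_diff_distrib)
  have 3: "transpose (A ** X) = A ** X"
  proof (rule sym_from_adj)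
    fix y y'
    have "inner (A *v f y) y' = inner (A *v f y) (A *v f y')"
      using orthR[of "f y" y'] by (simp add: inner_diff_right)
    moreover have "inner y (A *v f y') = inner (A *v f y) (A *v f y')"
      using orthR[of "f y'" y] by (simp add: inner_diff_right inner_commute)
    ultimately show "inner ((A ** X) *v y) y' = inner y ((A ** X) *v y')"
      by (simp add: Xf flip: matrix_vector_mul_assoc)
  qed
  have 4: "transpose (X ** A) = X ** A"
  proof (rule sym_from_adj)
    fix x x'
    have "inner (f (A *v x)) (x' - f (A *v x')) = 0" for x x'
      using orthQ[of "f (A *v x)" "x' - f (A *v x')"] f AfA
      by (simp add: matrix_vector_mult_diff_distrib)
    from this[of x x'] this[of x' x]
    show "inner ((X ** A) *v x) x' = inner x ((X ** A) *v x')"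
      by (simp add: Xf inner_diff_right inner_commute flip: matrix_vector_mul_assoc)
  qed
  show ?thesis using 1 2 3 4 by blast
qed

lemma pinv_props:
  fixes A :: "real^'n^'m"
  shows "A ** pinv A ** A = A \<and> pinv A ** A ** pinv A = pinv A \<and>
    transpose (A ** pinv A) = A ** pinv A \<and> transpose (pinv A ** A) = pinv A ** A"
  unfolding pinv_def
  by (rule theI') (use pinv_exists[of A] pinv_unique[of A] in blast)




definition isproj :: "real^'m^'m \<Rightarrow> bool" where
  "isproj P \<longleftrightarrow> transpose P = P \<and> P ** P = P"

lemma mm_sub_l: "(A::real^'n^'m) ** (B - C) = A ** B - A ** C"
  by (simp add: vec_eq_iff matrix_matrix_mult_def sum_subtractf algebra_simps)
lemma mm_sub_r: "((A::real^'n^'m) - B) ** C = A ** C - B ** C"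
  by (simp add: vec_eq_iff matrix_matrix_mult_def sum_subtractf algebra_simps)
lemma transpose_sub: "transpose ((A::real^'n^'m) - B) = transpose A - transpose B"
  by (simp add: vec_eq_iff transpose_def)

lemma proj_sym_entry: "isproj P \<Longrightarrow> P$j$k = P$k$j"
  unfolding isproj_def by (metis transpose_def vec_lambda_beta)

lemma trace_proj_nonneg:
  assumes "isproj (P::real^'m^'m)" shows "0 \<le> trace P"
proof -
  have "P$k$k = (\<Sum>j\<in>UNIV. P$k$j * P$k$j)" for k
  proof -
    have "P$k$k = (P ** P)$k$k" using assms unfolding isproj_def by simp
    also have "\<dots> = (\<Sum>j\<in>UNIV. P$k$j * P$j$k)" by (simp add: matrix_matrix_mult_def)
    also have "\<dots> = (\<Sum>j\<in>UNIV. P$k$j * P$k$j)" using proj_sym_entry[OF assms] by simp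
    finally show ?thesis .
  qed
  then show ?thesis unfolding trace_def by (simp add: sum_nonneg)
qed

lemma trace_proj_ge1:
  assumes P: "isproj (P::real^'m^'m)" and nz: "P \<noteq> 0" shows "1 \<le> trace P"
proof -
  obtain x where x: "P *v x \<noteq> 0" using nz by (metis matrix_eq matrix_vector_mult_0)
  define u where "u = (1 / norm (P *v x)) *\<^sub>R (P *v x)"
  have Pu: "P *v u = u" using P unfolding u_def isproj_def
    by (simp add: matrix_vector_mult_scaleR matrix_vector_mul_assoc)
  have uu: "inner u u = 1" using x unfolding u_def by (simp add: dot_square_norm)
  define U :: "real^'m^'m" where "U = (\<chi> i j. u$i * u$j)"
  have PU: "P ** U = U"
  proof -
    have "(\<Sum>k\<in>UNIV. P$i$k * (u$k * u$j)) = u$i * u$j" for i j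
    proof -
      have "(\<Sum>k\<in>UNIV. P$i$k * (u$k * u$j)) = (P *v u)$i * u$j"
        by (simp add: matrix_vector_mult_def sum_distrib_right mult.assoc)
      then show ?thesis using Pu by simp
    qed
    then show ?thesis by (simp add: U_def matrix_matrix_mult_def vec_eq_iff)
  qed
  have UP: "U ** P = U"
  proof -
    have "(\<Sum>k\<in>UNIV. (u$i * u$k) * P$k$j) = u$i * u$j" for i j
    proof -
      have "(\<Sum>k\<in>UNIV. (u$i * u$k) * P$k$j) = (\<Sum>k\<in>UNIV. u$i * (P$j$k * u$k))"
        using proj_sym_entry[OF P, of j] by (intro sum.cong) auto
      also have "\<dots> = u$i * (P *v u)$j"
        by (simp add: matrix_vector_mult_def sum_distrib_left)
      finally have "(\<Sum>k\<in>UNIV. (u$i * u$k) * P$k$j) = u$i * (P *v u)$j" .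
      then show ?thesis using Pu by simp
    qed
    then show ?thesis by (simp add: U_def matrix_matrix_mult_def vec_eq_iff)
  qed
  have UU: "U ** U = U"
  proof -
    have "(\<Sum>k\<in>UNIV. (u$i * u$k) * (u$k * u$j)) = u$i * u$j" for i j
    proof -
      have "(\<Sum>k\<in>UNIV. (u$i * u$k) * (u$k * u$j)) = u$i * u$j * inner u u"
        by (simp add: inner_vec_def sum_distrib_left algebra_simps)
      then show ?thesis using uu by simp
    qed
    then show ?thesis by (simp add: U_def matrix_matrix_mult_def vec_eq_iff)
  qed
  have tU: "transpose U = U" by (simp add: U_def transpose_def vec_eq_iff mult.commute)
  have trU: "trace U = 1" using uu by (simp add: U_def trace_def inner_vec_def)
  have "isproj (P - U)" using P unfolding isproj_def
    by (simp add: transpose_sub mm_sub_l mm_sub_r PU UP UU tU)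
  then have "0 \<le> trace (P - U)" by (rule trace_proj_nonneg)
  then show ?thesis by (simp add: trace_sub trU)
qed




definition VS :: "('i \<Rightarrow> real^'s^'m) \<Rightarrow> 'i set \<Rightarrow> (real^'m) set" where
  "VS G S = span (\<Union>i\<in>S. columns (G i))"

lemma vm_component: "((x::real^'m) v* A)$k = inner x (column k A)"
  by (simp add: vector_matrix_mult_def inner_vec_def column_def mult.commute)

lemma col_in_VS: "i \<in> S \<Longrightarrow> G i *v y \<in> VS G S"
proof -
  assume "i \<in> S"
  then have "span (columns (G i)) \<subseteq> VS G S" unfolding VS_def by (intro span_mono) auto
  then show ?thesis using matrix_vector_mult_in_columnspace by blast
qed

lemma orth_all_cols:
  assumes "\<And>j. j \<in> S \<Longrightarrow> (x::real^'m) v* G j = 0" and "y \<in> VS G S"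
  shows "inner x y = 0"
proof -
  have "orthogonal x y" using assms(2) unfolding VS_def
  proof (rule orthogonal_to_span)
    fix z assume "z \<in> (\<Union>i\<in>S. columns (G i))"
    then obtain j k where j: "j \<in> S" and z: "z = column k (G j)"
      by (auto simp: columns_def)
    have "(x v* G j)$k = 0" using assms(1)[OF j] by simp
    then show "orthogonal x z" using z by (simp add: vm_component orthogonal_def)
  qed
  then show ?thesis by (simp add: orthogonal_def)
qed

lemma mkym_step:
  fixes G :: "'i::finite \<Rightarrow> real^'s^'m"
  assumes span: "span (\<Union>i. columns (G i)) = UNIV"
  and P: "isproj P" and PG: "\<forall>j\<in>S. P ** G j = 0" and PV: "\<forall>x. x - P *v x \<in> VS G S"
  and ch: "mkym_choice G S P i"
  shows "i \<notin> S" "isproj (mkym_update G P i)"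
    "\<forall>j\<in>insert i S. mkym_update G P i ** G j = 0"
    "\<forall>x. x - mkym_update G P i *v x \<in> VS G (insert i S)"
    "trace (mkym_update G P i) \<le> trace P - 1"
proof -
  obtain v where v: "v \<in> col_space P" "v \<noteq> 0" and iS: "i \<notin> S"
    and mx: "\<And>j. j \<notin> S \<Longrightarrow> (norm (v v* G j))\<^sup>2 \<le> (norm (v v* G i))\<^sup>2"
    using ch unfolding mkym_choice_def by blast
  show "i \<notin> S" by (rule iS)
  have tP: "transpose P = P" and PP: "P ** P = P" using P unfolding isproj_def by auto
  have "span (columns P) \<subseteq> {w. P *v w = w}"
  proof (rule span_minimal)
    show "columns P \<subseteq> {w. P *v w = w}"
      using PP by (auto simp: columns_def matrix_vector_mult_basis[symmetric] matrix_vector_mul_assoc)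
    show "subspace {w. P *v w = w}"
      by (auto simp: subspace_def matrix_vector_right_distrib matrix_vector_mult_scaleR)
  qed
  then have Pv: "P *v v = v" using v(1) unfolding col_space_def by blast
  have vP: "v v* P = v" using Pv tP by (metis transpose_matrix_vector)
  have vGS: "v v* G j = 0" if "j \<in> S" for j
  proof -
    have "v v* G j = (v v* P) v* G j" using vP by simp
    also have "\<dots> = 0" using PG that by (simp add: vector_matrix_mul_assoc)
    finally show ?thesis .
  qed
  have "\<exists>j. v v* G j \<noteq> 0"
  proof (rule ccontr)
    assume "\<not> ?thesis"
    then have "inner v v = 0" using orth_all_cols[of UNIV v G v] span by (simp add: VS_def)
    then show False using v(2) by simp
  qed
  then obtain j where j: "v v* G j \<noteq> 0" by blast
  then have "j \<notin> S" using vGS by blast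
  then have "(norm (v v* G j))\<^sup>2 \<le> (norm (v v* G i))\<^sup>2" by (rule mx)
  moreover have "0 < (norm (v v* G j))\<^sup>2" using j by simp
  ultimately have vGi: "v v* G i \<noteq> 0" by fastforce
  define A where "A = P ** G i"
  have "v v* A = v v* G i" unfolding A_def using vP by (metis vector_matrix_mul_assoc)
  then have Anz: "A \<noteq> 0" using vGi by auto
  define X where "X = pinv A"
  define H where "H = A ** X"
  have pp: "A ** X ** A = A" "X ** A ** X = X" "transpose (A ** X) = A ** X"
    using pinv_props[of A] unfolding X_def by auto
  have HH: "H ** H = H" unfolding H_def by (metis pp(1) matrix_mul_assoc)
  have PH: "P ** H = H" unfolding H_def A_def by (metis PP matrix_mul_assoc)
  have tH: "transpose H = H" unfolding H_def by (rule pp(3))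
  have HP: "H ** P = H"
  proof -
    have "transpose (H ** P) = H" by (simp add: matrix_transpose_mul tP tH PH)
    then show ?thesis using tH by (metis transpose_transpose)
  qed
  have HA: "H ** A = A" unfolding H_def by (rule pp(1))
  have z: "(0::real^'m^'m) ** A = 0" by (simp add: matrix_matrix_mult_def vec_eq_iff)
  have Hnz: "H \<noteq> 0" using HA Anz z by metis
  have Hproj: "isproj H" unfolding isproj_def using tH HH by simp
  have upd: "mkym_update G P i = P - H" unfolding mkym_update_def H_def A_def X_def by simp
  show "isproj (mkym_update G P i)" unfolding upd isproj_def
    by (simp add: transpose_sub tP tH mm_sub_l mm_sub_r PP PH HP HH)
  show "\<forall>j\<in>insert i S. mkym_update G P i ** G j = 0"
  proof
    fix j assume "j \<in> insert i S"
    then show "mkym_update G P i ** G j = 0"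
    proof
      assume "j = i"
      have "H ** G i = H ** A" unfolding A_def by (metis HP matrix_mul_assoc)
      then show ?thesis using \<open>j = i\<close> HA by (simp add: upd mm_sub_r A_def)
    next
      assume "j \<in> S"
      have "H ** G j = H ** (P ** G j)" by (metis HP matrix_mul_assoc)
      then show ?thesis using PG \<open>j \<in> S\<close> by (simp add: upd mm_sub_r)
    qed
  qed
  show "\<forall>x. x - mkym_update G P i *v x \<in> VS G (insert i S)"
  proof
    fix x
    have sub: "VS G S \<subseteq> VS G (insert i S)" unfolding VS_def by (intro span_mono) auto
    define g where "g = G i *v (X *v x)"
    have "H *v x = P *v g" unfolding g_def H_def A_def by (simp add: matrix_vector_mul_assoc matrix_mul_assoc)
    moreover have "g \<in> VS G (insert i S)" unfolding g_def by (rule col_in_VS) simp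
    moreover have "g - P *v g \<in> VS G (insert i S)" using PV sub by blast
    ultimately have hx: "H *v x \<in> VS G (insert i S)" unfolding VS_def
      using span_diff[of g _ "g - P *v g"] by simp
    have px: "x - P *v x \<in> VS G (insert i S)" using PV sub by blast
    have "(x - P *v x) + H *v x \<in> VS G (insert i S)" unfolding VS_def
      using span_add[OF px[unfolded VS_def] hx[unfolded VS_def]] .
    then show "x - mkym_update G P i *v x \<in> VS G (insert i S)"
      by (simp add: upd matrix_vector_mult_diff_rdistrib algebra_simps)
  qed
  show "trace (mkym_update G P i) \<le> trace P - 1"
    using trace_proj_ge1[OF Hproj Hnz] by (simp add: upd trace_sub)
qed




lemma sum_mv: "finite A \<Longrightarrow> (sum f A) *v x = (\<Sum>i\<in>A. f i *v (x::real^'n))"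
  for f :: "'a \<Rightarrow> real^'n^'m"
  by (induction A rule: finite_induct) (simp_all add: matrix_vector_mult_add_rdistrib)

lemma scaleR_mv: "(c *\<^sub>R (M::real^'n^'m)) *v x = c *\<^sub>R (M *v x)"
  by (simp add: vec_eq_iff matrix_vector_mult_def sum_distrib_left mult.assoc)

lemma nonsing:
  fixes G :: "'i::finite \<Rightarrow> real^'s^'m"
  assumes ne: "S \<noteq> {}" and all: "\<And>x. x \<in> VS G S"
  shows "nonsingular_design G (uniform_design S)"
proof -
  define w where "w = uniform_design S"
  define M where "M = info_matrix G w"
  have w0: "\<And>i. 0 \<le> w i" by (simp add: w_def uniform_design_def)
  have wS: "\<And>i. i \<in> S \<Longrightarrow> 0 < w i" using ne by (simp add: w_def uniform_design_def card_gt_0_iff)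
  have "x = 0" if Mx: "M *v x = 0" for x
  proof -
    have "inner x (M *v x) = (\<Sum>i\<in>UNIV. w i * inner (x v* G i) (x v* G i))"
    proof -
      have "inner x ((G i ** transpose (G i)) *v x) = inner (x v* G i) (x v* G i)" for i
        by (simp add: dot_lmul_matrix flip: matrix_vector_mul_assoc)
      then show ?thesis
        by (simp add: M_def info_matrix_def sum_mv scaleR_mv inner_sum_right)
    qed
    then have "(\<Sum>i\<in>UNIV. w i * inner (x v* G i) (x v* G i)) = 0" using Mx by simp
    then have "\<forall>i\<in>UNIV. w i * inner (x v* G i) (x v* G i) = 0"
      by (subst (asm) sum_nonneg_eq_0_iff) (auto intro: mult_nonneg_nonneg w0)
    then have "x v* G i = 0" if "i \<in> S" for i using wS[OF that] by force
    then have "inner x x = 0" using orth_all_cols[of S x G x] all by blast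
    then show ?thesis by simp
  qed
  then have "\<exists>B. B ** M = mat 1" by (simp add: matrix_left_invertible_ker)
  then show ?thesis unfolding nonsingular_design_def M_def w_def
    by (simp add: invertible_left_inverse)
qed

lemma design: "finite S \<Longrightarrow> S \<noteq> {} \<Longrightarrow> is_design (uniform_design (S::'i::finite set))"
  by (simp add: is_design_def uniform_design_def sum.If_cases)

definition invar :: "('i::finite \<Rightarrow> real^'s^'m) \<Rightarrow> ('i set \<times> (real^'m^'m)) \<Rightarrow> bool" where
  "invar G st \<longleftrightarrow> isproj (snd st) \<and> (\<forall>j\<in>fst st. snd st ** G j = 0) \<and>
     (\<forall>x. x - snd st *v x \<in> VS G (fst st)) \<and> trace (snd st) + real (card (fst st)) \<le> real CARD('m)
     \<and> snd st \<noteq> 0"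

lemma trace_zero: "trace (0::real^'m^'m) = 0" by (simp add: trace_def)

lemma mat1_nz: "(mat 1 :: real^'m^'m) \<noteq> 0"
proof
  assume "(mat 1 :: real^'m^'m) = 0"
  then have "(mat 1 :: real^'m^'m) $ undefined $ undefined = 0" by simp
  then show False by (simp add: mat_def)
qed

lemma reach_invar:
  fixes G :: "'i::finite \<Rightarrow> real^'s^'m"
  assumes span: "span (\<Union>i. columns (G i)) = UNIV"
  shows "mkym_reachable G st \<Longrightarrow> invar G st"
  unfolding mkym_reachable_def
proof (induction rule: rtranclp_induct)
  case base
  show ?case unfolding invar_def mkym_init_def isproj_def
    by (simp add: trace_I VS_def span_zero mat1_nz)
next
  case (step st st')
  obtain i where ch: "mkym_choice G (fst st) (snd st) i" and S': "fst st' = insert i (fst st)"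
    and P': "snd st' = mkym_update G (snd st) i" and tr: "\<not> trace (snd st') < 1/2"
    using step(2) unfolding mkym_next_def by blast
  have I: "isproj (snd st)" "\<forall>j\<in>fst st. snd st ** G j = 0" "\<forall>x. x - snd st *v x \<in> VS G (fst st)"
    "trace (snd st) + real (card (fst st)) \<le> real CARD('m)"
    using step(3) unfolding invar_def by auto
  note s = mkym_step[OF span I(1-3) ch]
  have "card (fst st') = card (fst st) + 1" using S' s(1) by simp
  moreover have "snd st' \<noteq> 0"
  proof
    assume "snd st' = 0"
    then show False using tr trace_zero[where 'm='m] by simp
  qed
  ultimately show ?case unfolding invar_def using s I(4) S' P' by simp
qed




lemma next_card:
  "mkym_next G st st' \<Longrightarrow> card (fst st') = Suc (card (fst st))"
  unfolding mkym_next_def mkym_choice_def by auto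

lemma no_inf:
  fixes G :: "'i::finite \<Rightarrow> real^'s^'m"
  shows "\<not> (\<exists>f. f 0 = mkym_init \<and> (\<forall>k. mkym_next G (f k) (f (Suc k))))"
proof
  assume "\<exists>f. f 0 = mkym_init \<and> (\<forall>k. mkym_next G (f k) (f (Suc k)))"
  then obtain f where f0: "f 0 = mkym_init" and fn: "\<And>k. mkym_next G (f k) (f (Suc k))" by blast
  have c: "card (fst (f k)) = k" for k
    by (induction k) (simp_all add: f0 mkym_init_def next_card[OF fn])
  have "card (fst (f (Suc CARD('i)))) \<le> CARD('i)" by (rule card_mono) auto
  then show False using c by simp
qed

lemma choice_exists:
  fixes G :: "'i::finite \<Rightarrow> real^'s^'m"
  assumes span: "span (\<Union>i. columns (G i)) = UNIV" and inv: "invar G st"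
  shows "\<exists>i. mkym_choice G (fst st) (snd st) i"
proof -
  obtain S P where st: "st = (S, P)" by force
  have Pnz: "P \<noteq> 0" and PG: "\<forall>j\<in>S. P ** G j = 0" using inv unfolding invar_def st by auto
  have "\<exists>k. column k P \<noteq> 0"
  proof (rule ccontr)
    assume "\<not> ?thesis"
    then have "P = 0" by (simp add: column_def vec_eq_iff)
    then show False using Pnz by simp
  qed
  then obtain k where k: "column k P \<noteq> 0" by blast
  define v where "v = column k P"
  have vc: "v \<in> col_space P" unfolding col_space_def v_def columns_def
    by (rule span_base) blast
  have "S \<noteq> UNIV"
  proof
    assume SU: "S = UNIV"
    have "span (\<Union>i. columns (G i)) \<subseteq> {w. P *v w = 0}"
    proof (rule span_minimal)
      show "(\<Union>i. columns (G i)) \<subseteq> {w. P *v w = 0}"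
        using PG SU by (auto simp: columns_def matrix_vector_mult_basis[symmetric] matrix_vector_mul_assoc)
      show "subspace {w. P *v w = 0}"
        by (auto simp: subspace_def matrix_vector_right_distrib matrix_vector_mult_scaleR)
    qed
    then have "P = 0" using span by (auto simp: matrix_eq)
    then show False using Pnz by simp
  qed
  define g where "g j = (norm (v v* G j))\<^sup>2" for j
  define T where "T = - S"
  have T: "finite T" "T \<noteq> {}" using \<open>S \<noteq> UNIV\<close> unfolding T_def by auto
  have "Max (g ` T) \<in> g ` T" using T by simp
  then obtain i where i: "i \<in> T" "g i = Max (g ` T)" by auto
  have "\<forall>j. j \<notin> S \<longrightarrow> g j \<le> g i" using T i unfolding T_def by auto
  then have "mkym_choice G S P i"
    unfolding mkym_choice_def using vc k i(1) unfolding g_def v_def T_def by auto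
  then show ?thesis using st by auto
qed

theorem theorem2:
  fixes G :: "'i::finite \<Rightarrow> real^'s^'m"
  assumes "span (\<Union>i. columns (G i)) = UNIV"
  shows "\<not> (\<exists>f. f 0 = mkym_init \<and> (\<forall>k. mkym_next G (f k) (f (Suc k))))
    \<and> (\<forall>st. mkym_reachable G st \<longrightarrow> (\<exists>i. mkym_choice G (fst st) (snd st) i))
    \<and> (\<forall>st S. mkym_reachable G st \<longrightarrow> mkym_stop G st S \<longrightarrow>
           card S \<le> CARD('m) \<and> is_design (uniform_design S) \<and>
           nonsingular_design G (uniform_design S))"
proof (intro conjI allI impI)
  show "\<not> (\<exists>f. f 0 = mkym_init \<and> (\<forall>k. mkym_next G (f k) (f (Suc k))))" by (rule no_inf)
next
  fix st assume "mkym_reachable G st"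
  then show "\<exists>i. mkym_choice G (fst st) (snd st) i"
    using choice_exists[OF assms] reach_invar[OF assms] by blast
next
  fix st S assume r: "mkym_reachable G st" and sp: "mkym_stop G st S"
  have inv: "invar G st" using reach_invar[OF assms r] .
  obtain i where ch: "mkym_choice G (fst st) (snd st) i" and S: "S = insert i (fst st)"
    and stp: "card S = CARD('m) \<or> trace (mkym_update G (snd st) i) < 1/2"
    using sp unfolding mkym_stop_def by blast
  have I: "isproj (snd st)" "\<forall>j\<in>fst st. snd st ** G j = 0" "\<forall>x. x - snd st *v x \<in> VS G (fst st)"
    "trace (snd st) + real (card (fst st)) \<le> real CARD('m)" "snd st \<noteq> 0"
    using inv unfolding invar_def by auto
  note s = mkym_step[OF assms I(1-3) ch]
  have t1: "1 \<le> trace (snd st)" by (rule trace_proj_ge1[OF I(1) I(5)])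
  have cS: "card S = Suc (card (fst st))" using S s(1) by simp
  then show "card S \<le> CARD('m)" using t1 I(4) by linarith
  show "is_design (uniform_design S)" using S by (intro design) auto
  define P' where "P' = mkym_update G (snd st) i"
  have "trace P' < 1/2"
    using stp s(5) I(4) cS unfolding P'_def by force
  then have "P' = 0" using trace_proj_ge1[OF s(2)[folded P'_def]] by force
  then have "\<And>x. x \<in> VS G S" using s(4) S unfolding P'_def by force
  then show "nonsingular_design G (uniform_design S)" using S by (intro nonsing) auto
qed


end
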